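(* Let $p\geq r$ and let $A$ be a nonnegative symmetric $r$-matrix of order $n$. If $A$ is regular, then $\eta^{(p)}(A)=n^{-r/p}\Sigma A$.
   Context: A cubical $r$-matrix of order $n$ is a function $A$ on $[n]^r$ with entries $a_{i_1,\ldots,i_r}$; symmetric means invariant under permutations of indices. $\Sigma B$ denotes the sum of all entries of a matrix $B$. $\eta^{(p)}(A)=\max\{|\sum a_{i_1,\ldots,i_r}x_{i_1}\cdots x_{i_r}|:\mathbf{x}\in\mathbb{R}^n,|\mathbf{x}|_p=1\}$. For $k\in[r]$, $s\in[n]$, the slice $A^{(k)}_s$ is the $(r-1)$-matrix obtained by fixing $i_k=s$. $A$ is regular if for every $k\in[r]$, $\Sigma A^{(k)}_1=\cdots=\Sigma A^{(k)}_n$. *)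

theory Defs
  imports Complex_Main "HOL-Combinatorics.Permutations"
begin

text \<open>A cubical r-matrix of order n is a real function on index tuples; we use lists
  of length r with entries in {0..<n} (i.e. [n] is represented as {0..<n}).
  Values of A on other lists are irrelevant.\<close>

definition tuples :: "nat \<Rightarrow> nat \<Rightarrow> nat list set" where
  "tuples r n = {is. length is = r \<and> set is \<subseteq> {..<n}}"

definition msum :: "nat \<Rightarrow> nat \<Rightarrow> (nat list \<Rightarrow> real) \<Rightarrow> real" where
  "msum r n A = (\<Sum>is\<in>tuples r n. A is)"

definition symmetric_matrix :: "nat \<Rightarrow> nat \<Rightarrow> (nat list \<Rightarrow> real) \<Rightarrow> bool" where
  "symmetric_matrix r n A \<longleftrightarrow>
     (\<forall>is\<in>tuples r n. \<forall>\<sigma>. \<sigma> permutes {..<r} \<longrightarrow> A (map (\<lambda>k. is ! \<sigma> k) [0..<r]) = A is)"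

definition nonneg_matrix :: "nat \<Rightarrow> nat \<Rightarrow> (nat list \<Rightarrow> real) \<Rightarrow> bool" where
  "nonneg_matrix r n A \<longleftrightarrow> (\<forall>is\<in>tuples r n. 0 \<le> A is)"

definition slice_sum :: "nat \<Rightarrow> nat \<Rightarrow> (nat list \<Rightarrow> real) \<Rightarrow> nat \<Rightarrow> nat \<Rightarrow> real" where
  "slice_sum r n A k s = (\<Sum>is\<in>{is\<in>tuples r n. is ! k = s}. A is)"

definition regular_matrix :: "nat \<Rightarrow> nat \<Rightarrow> (nat list \<Rightarrow> real) \<Rightarrow> bool" where
  "regular_matrix r n A \<longleftrightarrow>
     (\<forall>k<r. \<forall>s<n. \<forall>t<n. slice_sum r n A k s = slice_sum r n A k t)"

definition pnorm :: "real \<Rightarrow> nat \<Rightarrow> (nat \<Rightarrow> real) \<Rightarrow> real" where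
  "pnorm p n x = (\<Sum>i<n. \<bar>x i\<bar> powr p) powr (1 / p)"

definition form :: "nat \<Rightarrow> nat \<Rightarrow> (nat list \<Rightarrow> real) \<Rightarrow> (nat \<Rightarrow> real) \<Rightarrow> real" where
  "form r n A x = (\<Sum>is\<in>tuples r n. A is * (\<Prod>k<r. x (is ! k)))"

text \<open>eta^(p)(A): the maximum (here: supremum, which is attained) of |form| over the p-unit sphere.\<close>
definition eta :: "real \<Rightarrow> nat \<Rightarrow> nat \<Rightarrow> (nat list \<Rightarrow> real) \<Rightarrow> real" where
  "eta p r n A = Sup {\<bar>form r n A x\<bar> | x. pnorm p n x = 1}"

end

theory Submission imports Defs "HOL-Analysis.Analysis" begin

lemma finite_tuples: "finite (tuples r n)"
  unfolding tuples_def using finite_lists_length_eq[of "{..<n}" r] by (simp add: conj_commute)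

lemma tuple_nth: "is \<in> tuples r n \<Longrightarrow> k < r \<Longrightarrow> is ! k < n"
  unfolding tuples_def by (metis (mono_tags, lifting) lessThan_iff mem_Collect_eq nth_mem subsetD)

lemma swap:
  assumes "k < r"
  shows "(\<Sum>is\<in>tuples r n. A is * f (is!k)) = (\<Sum>s<n. f s * slice_sum r n A k s)"
proof -
  have "(\<Sum>is\<in>tuples r n. A is * f (is!k)) =
     (\<Sum>s<n. \<Sum>is\<in>{is. is \<in> tuples r n \<and> is!k = s}. A is * f (is!k))"
    by (rule sum.group[symmetric]) (use finite_tuples tuple_nth assms in auto)
  also have "\<dots> = (\<Sum>s<n. f s * slice_sum r n A k s)"
    unfolding slice_sum_def sum_distrib_left
    by (intro sum.cong refl) (auto simp: mult.commute)
  finally show ?thesis .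
qed

lemma slice_const:
  assumes "regular_matrix r n A" "k < r" "s < n"
  shows "slice_sum r n A k s = msum r n A / n"
proof -
  have "msum r n A = (\<Sum>s'<n. slice_sum r n A k s')"
    using swap[OF assms(2), where n=n and A=A and f="\<lambda>_. 1"] by (simp add: msum_def)
  also have "\<dots> = (\<Sum>s'<n. slice_sum r n A k s)"
  proof (rule sum.cong[OF refl])
    fix t assume "t \<in> {..<n}"
    then show "slice_sum r n A k t = slice_sum r n A k s"
      using assms unfolding regular_matrix_def by blast
  qed
  also have "\<dots> = real n * slice_sum r n A k s" by simp
  finally show ?thesis using assms(3) by (simp add: field_simps)
qed

lemma amgm:
  fixes y :: "nat \<Rightarrow> real"
  assumes "1 \<le> r" "\<And>k. 0 \<le> y k"
  shows "(\<Prod>k<r. y k) \<le> (\<Sum>k<r. y k ^ r) / r"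
proof -
  have P: "0 \<le> (\<Prod>k<r. y k)" using assms by (simp add: prod_nonneg)
  have "(\<Prod>k<r. y k ^ r) powr (1 / card {..<r}) \<le> (\<Sum>k<r. y k ^ r / card {..<r})"
    by (rule arith_geom_mean) (use assms in \<open>auto simp: lessThan_empty_iff\<close>)
  moreover have "(\<Prod>k<r. y k ^ r) powr (1 / card {..<r}) = (\<Prod>k<r. y k)"
  proof -
    have "(\<Prod>k<r. y k ^ r) = (\<Prod>k<r. y k) ^ r" by (simp add: prod_power_distrib)
    also have "\<dots> = (\<Prod>k<r. y k) powr r" using P assms(1) by (simp add: powr_realpow')
    finally show ?thesis using P assms(1) by (simp add: powr_powr)
  qed
  ultimately show ?thesis by (simp add: sum_divide_distrib)
qed

lemma power_mean:
  fixes u :: "nat \<Rightarrow> real"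
  assumes "finite I" "\<And>i. i \<in> I \<Longrightarrow> 0 \<le> u i" "1 \<le> q" "(\<Sum>i\<in>I. u i powr q) = 1"
  shows "(\<Sum>i\<in>I. u i) \<le> card I powr (1 - 1/q)"
proof -
  define J where "J = {i\<in>I. 0 < u i}"
  define m where "m = card J"
  have fJ: "finite J" "J \<subseteq> I" using assms(1) by (auto simp: J_def)
  have s1: "(\<Sum>i\<in>I. u i) = (\<Sum>i\<in>J. u i)"
    by (rule sum.mono_neutral_right[OF assms(1) fJ(2)]) (use assms in \<open>force simp: J_def\<close>)
  have s2: "(\<Sum>i\<in>J. u i powr q) = 1"
    unfolding assms(4)[symmetric] by (rule sum.mono_neutral_right[symmetric, OF assms(1) fJ(2)])
       
       (metis (mono_tags, lifting) Diff_iff J_def assms(2) mem_Collect_eq order_le_less powr_0)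
  have Jne: "J \<noteq> {}" using s2 by auto
  have m0: "0 < m" using Jne fJ by (simp add: m_def card_gt_0_iff)
  have "(\<Sum>i\<in>J. (1/m) *\<^sub>R u i) powr q \<le> (\<Sum>i\<in>J. (1/m) * u i powr q)"
    by (rule convex_on_sum[OF fJ(1) Jne powr_convex[OF assms(3)]]) (use m0 in \<open>auto simp: J_def m_def\<close>)
  also have "\<dots> = 1/m" using s2 by (simp add: sum_divide_distrib[symmetric])
  finally have le: "(\<Sum>i\<in>J. u i / m) powr q \<le> 1/m" by (simp add: divide_inverse mult.commute)
  define M where "M = (\<Sum>i\<in>J. u i / m)"
  have M0: "0 \<le> M" unfolding M_def using assms fJ by (intro sum_nonneg) auto
  have q0: "0 < q" using assms by simp
  have "M = (M powr q) powr (1/q)" using M0 q0 by (simp add: powr_powr)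
  also have "\<dots> \<le> (1/m) powr (1/q)" by (rule powr_mono2) (use le q0 M0 in \<open>auto simp: M_def\<close>)
  finally have "M \<le> (1/m) powr (1/q)" .
  hence "m * M \<le> m * (1/m) powr (1/q)" using m0 by simp
  also have "m * (1/m) powr (1/q) = real m powr (1 - 1/q)"
    using m0 by (simp add: powr_diff powr_divide field_simps)
  also have "\<dots> \<le> card I powr (1 - 1/q)"
    by (rule powr_mono2) (use assms fJ in \<open>auto simp: m_def intro: card_mono\<close>)
  finally show ?thesis using m0 s1 by (simp add: M_def sum_divide_distrib[symmetric])
qed

lemma upper:
  assumes r1: "1 \<le> r" and n1: "1 \<le> n" and rp: "real r \<le> p"
    and nn: "nonneg_matrix r n A" and reg: "regular_matrix r n A" and px: "pnorm p n x = 1"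
  shows "\<bar>form r n A x\<bar> \<le> real n powr (- real r / p) * msum r n A"
proof -
  define y where "y i = \<bar>x i\<bar>" for i
  have y0: "0 \<le> y i" for i by (simp add: y_def)
  have p0: "0 < p" using r1 rp by simp
  have S0: "0 \<le> msum r n A" using nn unfolding msum_def nonneg_matrix_def by (simp add: sum_nonneg)
  have sumy: "(\<Sum>i<n. y i powr p) = 1"
  proof -
    define T where "T = (\<Sum>i<n. y i powr p)"
    have T0: "0 \<le> T" unfolding T_def by (simp add: sum_nonneg)
    have "T powr (1/p) = 1" using px by (simp add: pnorm_def T_def y_def)
    hence "(T powr (1/p)) powr p = 1" by simp
    thus ?thesis using T0 p0 by (simp add: powr_powr T_def)
  qed
  have h1: "\<bar>form r n A x\<bar> \<le> form r n A y"
  proof -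
    have "\<bar>form r n A x\<bar> \<le> (\<Sum>is\<in>tuples r n. \<bar>A is * (\<Prod>k<r. x (is ! k))\<bar>)"
      unfolding form_def by (rule sum_abs)
    also have "\<dots> = form r n A y" unfolding form_def
      by (intro sum.cong refl) (use nn in \<open>auto simp: nonneg_matrix_def abs_mult abs_prod y_def\<close>)
    finally show ?thesis .
  qed
  have h2: "form r n A y \<le> (\<Sum>is\<in>tuples r n. A is * ((\<Sum>k<r. y (is!k) ^ r) / r))"
    unfolding form_def
  proof (rule sum_mono)
    fix js assume "js \<in> tuples r n"
    hence "0 \<le> A js" using nn by (simp add: nonneg_matrix_def)
    moreover have "(\<Prod>k<r. y (js!k)) \<le> (\<Sum>k<r. y (js!k) ^ r) / r"
      by (rule amgm) (use r1 y0 in auto)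
    ultimately show "A js * (\<Prod>k<r. y (js!k)) \<le> A js * ((\<Sum>k<r. y (js!k) ^ r) / r)"
      by (metis mult_left_mono)
  qed
  have h3: "(\<Sum>is\<in>tuples r n. A is * ((\<Sum>k<r. y (is!k) ^ r) / r))
      = (\<Sum>k<r. \<Sum>is\<in>tuples r n. A is * y (is!k) ^ r) / r"
  proof -
    have "(\<Sum>is\<in>tuples r n. A is * ((\<Sum>k<r. y (is!k) ^ r) / r))
       = (\<Sum>is\<in>tuples r n. \<Sum>k<r. A is * y (is!k) ^ r / r)"
    proof (rule sum.cong[OF refl])
      fix js
      have "A js * ((\<Sum>k<r. y (js!k) ^ r) / r) = (A js * (\<Sum>k<r. y (js!k) ^ r)) / r"
        by (rule times_divide_eq_right)
      also have "\<dots> = (\<Sum>k<r. A js * y (js!k) ^ r) / r"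
        by (subst sum_distrib_left) (rule refl)
      also have "\<dots> = (\<Sum>k<r. A js * y (js!k) ^ r / r)"
        by (rule sum_divide_distrib)
      finally show "A js * ((\<Sum>k<r. y (js!k) ^ r) / r) = (\<Sum>k<r. A js * y (js!k) ^ r / r)" .
    qed
    also have "\<dots> = (\<Sum>k<r. \<Sum>is\<in>tuples r n. A is * y (is!k) ^ r / r)"
      by (rule sum.swap)
    also have "\<dots> = (\<Sum>k<r. \<Sum>is\<in>tuples r n. A is * y (is!k) ^ r) / r"
      by (simp add: sum_divide_distrib)
    finally show ?thesis .
  qed
  have h4: "(\<Sum>is\<in>tuples r n. A is * y (is!k) ^ r) = msum r n A / n * (\<Sum>s<n. y s ^ r)"
    if "k < r" for k
  proof -
    have "(\<Sum>is\<in>tuples r n. A is * y (is!k) ^ r) = (\<Sum>s<n. y s ^ r * slice_sum r n A k s)"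
      by (rule swap[OF that])
    also have "\<dots> = (\<Sum>s<n. y s ^ r * (msum r n A / n))"
      by (intro sum.cong refl) (simp add: slice_const[OF reg that])
    finally show ?thesis by (simp add: sum_distrib_left sum_distrib_right mult.commute)
  qed
  have h34: "(\<Sum>k<r. \<Sum>is\<in>tuples r n. A is * y (is!k) ^ r) / r = msum r n A / n * (\<Sum>s<n. y s ^ r)"
    using r1 by (simp add: h4)
  have h5: "(\<Sum>s<n. y s ^ r) \<le> real n powr (1 - real r / p)"
  proof -
    have q1: "1 \<le> p / r" using r1 rp by simp
    have eq: "(y s ^ r) powr (p / r) = y s powr p" for s
    proof (cases "y s = 0")
      case True then show ?thesis using r1 by simp
    next
      case False
      hence pos: "0 < y s" using y0[of s] by simp
      have "y s ^ r = y s powr r" using pos by (simp add: powr_realpow)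
      thus ?thesis using pos r1 by (simp add: powr_powr)
    qed
    have "(\<Sum>s<n. y s ^ r) \<le> card {..<n} powr (1 - 1 / (p / r))"
      by (rule power_mean) (use y0 q1 sumy eq in auto)
    thus ?thesis using r1 by simp
  qed
  have "\<bar>form r n A x\<bar> \<le> msum r n A / n * (\<Sum>s<n. y s ^ r)"
    using h1 h2 h3 h34 by linarith
  also have "\<dots> \<le> msum r n A / n * real n powr (1 - real r / p)"
  proof (rule mult_left_mono[OF h5])
    show "0 \<le> msum r n A / real n" using S0 by (rule divide_nonneg_nonneg) simp
  qed
  also have "\<dots> = real n powr (- real r / p) * msum r n A"
  proof -
    have e: "1 - real r / p = 1 + (- real r / p)" by simp
    have "real n powr (1 - real r / p) = real n powr 1 * real n powr (- real r / p)"
      unfolding e by (rule powr_add)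
    also have "\<dots> = real n * real n powr (- real r / p)" using n1 by simp
    finally have e2: "real n powr (1 - real r / p) = real n * real n powr (- real r / p)" .
    have nz: "real n \<noteq> 0" using n1 by simp
    show ?thesis unfolding e2 using nz by (simp add: field_simps)
  qed
  finally show ?thesis .
qed

lemma lower:
  assumes r1: "1 \<le> r" and n1: "1 \<le> n" and rp: "real r \<le> p"
  shows "pnorm p n (\<lambda>i. real n powr (-1/p)) = 1"
    and "form r n A (\<lambda>i. real n powr (-1/p)) = real n powr (- real r / p) * msum r n A"
proof -
  have p0: "0 < p" using r1 rp by simp
  have "(real n powr (-1/p)) powr p = real n powr (-1)" using p0 by (simp add: powr_powr)
  hence "(\<Sum>i<n. \<bar>real n powr (-1/p)\<bar> powr p) = 1"
    using n1 by (simp add: powr_minus)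
  thus "pnorm p n (\<lambda>i. real n powr (-1/p)) = 1" by (simp add: pnorm_def)
  have "(\<Prod>k<r. real n powr (-1/p)) = real n powr (- real r / p)"
    using n1 by (simp add: powr_power)
  thus "form r n A (\<lambda>i. real n powr (-1/p)) = real n powr (- real r / p) * msum r n A"
    by (simp add: form_def msum_def sum_distrib_right mult.commute)
qed

theorem theorem19:
  fixes p :: real and r n :: nat and A :: "nat list \<Rightarrow> real"
  assumes "1 \<le> r" and "1 \<le> n" and "real r \<le> p"
    and "nonneg_matrix r n A" and "symmetric_matrix r n A" and "regular_matrix r n A"
  shows "eta p r n A = real n powr (- real r / p) * msum r n A"
  unfolding eta_def
proof (rule cSup_eq_maximum)
  have S0: "0 \<le> msum r n A" using assms(4) unfolding msum_def nonneg_matrix_def by (simp add: sum_nonneg)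
  show "real n powr (- real r / p) * msum r n A \<in> {\<bar>form r n A x\<bar> |x. pnorm p n x = 1}"
    using lower[OF assms(1-3)] S0 by (intro CollectI exI[of _ "\<lambda>i. real n powr (-1/p)"]) simp
next
  fix v assume "v \<in> {\<bar>form r n A x\<bar> |x. pnorm p n x = 1}"
  then obtain x where "v = \<bar>form r n A x\<bar>" "pnorm p n x = 1" by blast
  then show "v \<le> real n powr (- real r / p) * msum r n A"
    using upper[OF assms(1-3) assms(4) assms(6)] by simp
qed

end
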